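(* Let $h:(\mathbb{R}^n,0)\to(\mathbb{R}^n,0)$ be a bi-Lipschitz homeomorphism germ, and let $U,V\subset\mathbb{R}^n$ be closed cones with vertex $0$. Suppose that $h(U)$ satisfies condition (SSP). Then $D(h(U\cap V))=D(h(U))\cap D(h(V))$.
   Context: A cone with vertex $0$ is a set $C\subset\mathbb{R}^n$ with $tC\subseteq C$ for all $t\ge0$. For a set-germ $A\subset\mathbb{R}^n$ at $0$, $D(A)=\{a\in S^{n-1}:\exists\, x_i\in A\setminus\{0\},\ x_i\to0,\ x_i/\|x_i\|\to a\}$. For sequences, $\|u_m\|\ll\|v_m\|,\|w_m\|$ means $\|u_m\|/\|v_m\|\to0$ and $\|u_m\|/\|w_m\|\to0$. $A$ satisfies condition (SSP) if for every sequence $a_m\in\mathbb{R}^n$ tending to $0$ with $\lim a_m/\|a_m\|\in D(A)$ there is a sequence $b_m\in A$ with $\|a_m-b_m\|\ll\|a_m\|,\|b_m\|$. A bi-Lipschitz homeomorphism germ is a homeomorphism germ $h$ with $h(0)=0$ and constants $0<K_1\le K_2$ with $K_1\|x-y\|\le\|h(x)-h(y)\|\le K_2\|x-y\|$ near $0$. *)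

theory Defs
  imports "HOL-Analysis.Analysis"
begin

definition is_cone :: "'a::real_vector set \<Rightarrow> bool" where
  "is_cone C \<longleftrightarrow> (\<forall>t::real. t \<ge> 0 \<longrightarrow> (\<forall>x\<in>C. t *\<^sub>R x \<in> C))"

definition tangent_dirs :: "'a::real_normed_vector set \<Rightarrow> 'a set" where
  "tangent_dirs A = {a. norm a = 1 \<and>
     (\<exists>x::nat \<Rightarrow> 'a. (\<forall>i. x i \<in> A - {0}) \<and> x \<longlonglongrightarrow> 0 \<and>
        (\<lambda>i. x i /\<^sub>R norm (x i)) \<longlonglongrightarrow> a)}"

definition SSP :: "'a::real_normed_vector set \<Rightarrow> bool" where
  "SSP A \<longleftrightarrow> (\<forall>a::nat \<Rightarrow> 'a. a \<longlonglongrightarrow> 0 \<and>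
      (\<exists>d\<in>tangent_dirs A. (\<lambda>m. a m /\<^sub>R norm (a m)) \<longlonglongrightarrow> d) \<longrightarrow>
      (\<exists>b::nat \<Rightarrow> 'a. (\<forall>m. b m \<in> A) \<and>
         (\<lambda>m. norm (a m - b m) / norm (a m)) \<longlonglongrightarrow> 0 \<and>
         (\<lambda>m. norm (a m - b m) / norm (b m)) \<longlonglongrightarrow> 0))"

text \<open>h is a bi-Lipschitz homeomorphism germ (R^n,0) -> (R^n,0), represented on the
  ball of radius \<delta> around 0, with constants K1, K2.\<close>
definition bi_lipschitz_germ :: "('a::euclidean_space \<Rightarrow> 'a) \<Rightarrow> real \<Rightarrow> real \<Rightarrow> real \<Rightarrow> bool" where
  "bi_lipschitz_germ h \<delta> K1 K2 \<longleftrightarrow> \<delta> > 0 \<and> 0 < K1 \<and> K1 \<le> K2 \<and> h 0 = 0 \<and>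
     continuous_on (ball 0 \<delta>) h \<and> inj_on h (ball 0 \<delta>) \<and> open (h ` ball 0 \<delta>) \<and>
     (\<forall>x\<in>ball 0 \<delta>. \<forall>y\<in>ball 0 \<delta>.
        K1 * norm (x - y) \<le> norm (h x - h y) \<and> norm (h x - h y) \<le> K2 * norm (x - y))"

end

theory Submission
  imports Defs
begin

lemma dir_diff_bound:
  fixes p q :: "'a::real_normed_vector"
  assumes "p \<noteq> 0"
  shows "norm (q /\<^sub>R norm q - p /\<^sub>R norm p) \<le> 2 * (norm (q - p) / norm p)"
proof (cases "q = 0")
  case True
  then show ?thesis using assms by simp
next
  case False
  have np: "norm p > 0" using assms by simp
  have nq: "norm q > 0" using False by simp
  have eq: "q /\<^sub>R norm q - p /\<^sub>R norm p = (q - p) /\<^sub>R norm p + (inverse (norm q) - inverse (norm p)) *\<^sub>R q"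
    by (simp add: algebra_simps)
  have t: "norm (q /\<^sub>R norm q - p /\<^sub>R norm p) \<le> norm ((q - p) /\<^sub>R norm p) + norm ((inverse (norm q) - inverse (norm p)) *\<^sub>R q)"
    unfolding eq by (rule norm_triangle_ineq)
  have A: "norm ((q - p) /\<^sub>R norm p) = norm (q - p) / norm p"
    by (simp add: divide_inverse_commute)
  have B1: "norm ((inverse (norm q) - inverse (norm p)) *\<^sub>R q) = \<bar>norm p - norm q\<bar> / norm p"
  proof -
    have c: "inverse (norm q) - inverse (norm p) = (norm p - norm q) / (norm q * norm p)"
      using np nq by (simp add: divide_simps)
    have "\<bar>(norm p - norm q) / (norm q * norm p)\<bar> = \<bar>norm p - norm q\<bar> / (norm q * norm p)"
      using np nq by (simp add: abs_divide)
    moreover have "\<bar>norm p - norm q\<bar> / (norm q * norm p) * norm q = \<bar>norm p - norm q\<bar> / norm p"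
      using nq by simp
    ultimately show ?thesis using c by simp
  qed
  have "\<bar>norm p - norm q\<bar> \<le> norm (q - p)"
    by (metis norm_minus_commute norm_triangle_ineq3)
  hence B2: "\<bar>norm p - norm q\<bar> / norm p \<le> norm (q - p) / norm p"
    using np by (simp add: divide_right_mono)
  show ?thesis using t A B1 B2 by linarith
qed

lemma dir_tendsto:
  fixes p q :: "nat \<Rightarrow> 'a::real_normed_vector"
  assumes "\<And>i. p i \<noteq> 0"
    and "(\<lambda>i. norm (p i - q i) / norm (p i)) \<longlonglongrightarrow> 0"
    and "(\<lambda>i. p i /\<^sub>R norm (p i)) \<longlonglongrightarrow> a"
  shows "(\<lambda>i. q i /\<^sub>R norm (q i)) \<longlonglongrightarrow> a"
proof -
  have "(\<lambda>i. q i /\<^sub>R norm (q i) - p i /\<^sub>R norm (p i)) \<longlonglongrightarrow> 0"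
  proof (rule Lim_null_comparison)
    show "\<forall>\<^sub>F i in sequentially. norm (q i /\<^sub>R norm (q i) - p i /\<^sub>R norm (p i)) \<le> 2 * (norm (p i - q i) / norm (p i))"
    proof (rule always_eventually, rule allI)
      fix i
      show "norm (q i /\<^sub>R norm (q i) - p i /\<^sub>R norm (p i)) \<le> 2 * (norm (p i - q i) / norm (p i))"
        using dir_diff_bound[OF assms(1)[of i], of "q i"] by (simp only: norm_minus_commute[of "q i"])
    qed
    show "(\<lambda>i. 2 * (norm (p i - q i) / norm (p i))) \<longlonglongrightarrow> 0"
      using tendsto_mult[OF tendsto_const assms(2), of 2] by simp
  qed
  from tendsto_add[OF this assms(3)] show ?thesis by simp
qed

lemma tangent_dirs_mono: "A \<subseteq> B \<Longrightarrow> tangent_dirs A \<subseteq> tangent_dirs B"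
  unfolding tangent_dirs_def by blast

theorem proposition2p29:
  fixes h :: "'a::euclidean_space \<Rightarrow> 'a" and U V :: "'a set" and \<delta> K1 K2 :: real
  assumes "bi_lipschitz_germ h \<delta> K1 K2"
    and "closed U" and "is_cone U" and "closed V" and "is_cone V"
    and "SSP (h ` (U \<inter> ball 0 \<delta>))"
  shows "tangent_dirs (h ` (U \<inter> V \<inter> ball 0 \<delta>)) =
         tangent_dirs (h ` (U \<inter> ball 0 \<delta>)) \<inter> tangent_dirs (h ` (V \<inter> ball 0 \<delta>))"
proof
  show "tangent_dirs (h ` (U \<inter> V \<inter> ball 0 \<delta>)) \<subseteq>
         tangent_dirs (h ` (U \<inter> ball 0 \<delta>)) \<inter> tangent_dirs (h ` (V \<inter> ball 0 \<delta>))"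
    by (intro Int_greatest tangent_dirs_mono image_mono) auto
next
  have bl: "\<delta> > 0" "0 < K1" "K1 \<le> K2" "h 0 = 0" "inj_on h (ball 0 \<delta>)"
    and lip: "\<And>x y. x \<in> ball 0 \<delta> \<Longrightarrow> y \<in> ball 0 \<delta> \<Longrightarrow>
        K1 * norm (x - y) \<le> norm (h x - h y) \<and> norm (h x - h y) \<le> K2 * norm (x - y)"
    using assms(1) unfolding bi_lipschitz_germ_def by auto
  have z0: "(0::'a) \<in> ball 0 \<delta>" using bl by simp
  show "tangent_dirs (h ` (U \<inter> ball 0 \<delta>)) \<inter> tangent_dirs (h ` (V \<inter> ball 0 \<delta>))
        \<subseteq> tangent_dirs (h ` (U \<inter> V \<inter> ball 0 \<delta>))"
  proof
    fix a assume a: "a \<in> tangent_dirs (h ` (U \<inter> ball 0 \<delta>)) \<inter> tangent_dirs (h ` (V \<inter> ball 0 \<delta>))"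
    hence na: "norm a = 1" unfolding tangent_dirs_def by blast
    have aV: "a \<in> tangent_dirs (h ` (V \<inter> ball 0 \<delta>))" using a by blast
    have "\<exists>y::nat \<Rightarrow> 'a. (\<forall>i. y i \<in> h ` (V \<inter> ball 0 \<delta>) - {0}) \<and> y \<longlonglongrightarrow> 0 \<and>
        (\<lambda>i. y i /\<^sub>R norm (y i)) \<longlonglongrightarrow> a"
      using aV unfolding tangent_dirs_def mem_Collect_eq by blast
    then obtain y where y: "\<And>i. y i \<in> h ` (V \<inter> ball 0 \<delta>) - {0}" "y \<longlonglongrightarrow> 0"
      "(\<lambda>i. y i /\<^sub>R norm (y i)) \<longlonglongrightarrow> a"
      by auto
    have "\<exists>v. v \<in> V \<inter> ball 0 \<delta> \<and> h v = y i" for i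
    proof -
      have "y i \<in> h ` (V \<inter> ball 0 \<delta>)" using y(1)[of i, THEN DiffD1] .
      then obtain v where "v \<in> V \<inter> ball 0 \<delta>" "y i = h v" by (rule imageE)
      thus ?thesis by auto
    qed
    hence "\<forall>i. \<exists>v. v \<in> V \<inter> ball 0 \<delta> \<and> h v = y i" by (rule allI)
    hence "\<exists>v. \<forall>i. v i \<in> V \<inter> ball 0 \<delta> \<and> h (v i) = y i" by (rule choice)
    then obtain v where v0: "\<forall>i. v i \<in> V \<inter> ball 0 \<delta> \<and> h (v i) = y i" by (elim exE)
    have v: "\<And>i. v i \<in> V \<inter> ball 0 \<delta>" "\<And>i. h (v i) = y i" using v0 by simp_all
    have ynz: "y i \<noteq> 0" for i using y(1) by auto
    have vnz: "v i \<noteq> 0" for i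
    proof
      assume "v i = 0"
      hence "y i = 0" using v(2)[of i] bl(4) by simp
      thus False using ynz by simp
    qed
    have ad: "\<exists>d\<in>tangent_dirs (h ` (U \<inter> ball 0 \<delta>)). (\<lambda>m. y m /\<^sub>R norm (y m)) \<longlonglongrightarrow> d"
      using y(3) IntD1[OF a] by (rule bexI)
    from assms(6)[unfolded SSP_def, rule_format, OF conjI[OF y(2) ad]]
    obtain b where b: "\<And>m. b m \<in> h ` (U \<inter> ball 0 \<delta>)"
      "(\<lambda>m. norm (y m - b m) / norm (y m)) \<longlonglongrightarrow> 0" by blast
    have "\<exists>u. u \<in> U \<inter> ball 0 \<delta> \<and> h u = b i" for i
    proof -
      have "b i \<in> h ` (U \<inter> ball 0 \<delta>)" using b(1)[of i] .
      then obtain u where "u \<in> U \<inter> ball 0 \<delta>" "b i = h u" by (rule imageE)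
      thus ?thesis by auto
    qed
    hence "\<forall>i. \<exists>u. u \<in> U \<inter> ball 0 \<delta> \<and> h u = b i" by (rule allI)
    hence "\<exists>u. \<forall>i. u i \<in> U \<inter> ball 0 \<delta> \<and> h (u i) = b i" by (rule choice)
    then obtain u where u0: "\<forall>i. u i \<in> U \<inter> ball 0 \<delta> \<and> h (u i) = b i" by (elim exE)
    have u: "\<And>i. u i \<in> U \<inter> ball 0 \<delta>" "\<And>i. h (u i) = b i" using u0 by simp_all
    have yv: "K1 * norm (v i) \<le> norm (y i) \<and> norm (y i) \<le> K2 * norm (v i)" for i
      using lip[OF _ z0, of "v i"] v bl(4) by auto
    have uv: "K1 * norm (v i - u i) \<le> norm (y i - b i)" for i
      using lip[of "v i" "u i"] u v by auto
    have vpos: "norm (v i) > 0" for i using vnz by simp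
    have uvrel: "(\<lambda>i. norm (v i - u i) / norm (v i)) \<longlonglongrightarrow> 0"
    proof (rule Lim_null_comparison)
      show "\<forall>\<^sub>F i in sequentially. norm (norm (v i - u i) / norm (v i)) \<le> (K2 / K1) * (norm (y i - b i) / norm (y i))"
      proof (rule always_eventually, rule allI)
        fix i
        have yp: "norm (y i) > 0" using ynz by simp
        have "norm (v i - u i) / norm (v i) \<le> (norm (y i - b i) / K1) / (norm (y i) / K2)"
        proof (rule frac_le)
          show "0 \<le> norm (y i - b i) / K1" using bl by simp
          show "norm (v i - u i) \<le> norm (y i - b i) / K1" using uv[of i] bl by (simp add: field_simps)
          show "0 < norm (y i) / K2" using yp bl by simp
          show "norm (y i) / K2 \<le> norm (v i)" using yv[of i] bl by (simp add: field_simps)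
        qed
        also have "\<dots> = (K2 / K1) * (norm (y i - b i) / norm (y i))" by (simp add: field_simps)
        finally show "norm (norm (v i - u i) / norm (v i)) \<le> (K2 / K1) * (norm (y i - b i) / norm (y i))"
          by simp
      qed
      show "(\<lambda>i. K2 / K1 * (norm (y i - b i) / norm (y i))) \<longlonglongrightarrow> 0"
        using tendsto_mult[OF tendsto_const b(2), of "K2/K1"] by simp
    qed
    have sph: "v i /\<^sub>R norm (v i) \<in> sphere 0 1" for i using vnz by simp
    obtain w r where w: "w \<in> sphere 0 1" "strict_mono r"
      "((\<lambda>i. v i /\<^sub>R norm (v i)) \<circ> r) \<longlonglongrightarrow> w"
    proof -
      have sph': "\<forall>i. v i /\<^sub>R norm (v i) \<in> sphere 0 1" using sph by blast
      show ?thesis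
        using seq_compactE[OF compact_imp_seq_compact[OF compact_sphere] sph'] that by blast
    qed
    have wV: "w \<in> V"
    proof (rule closed_sequentially[OF assms(4) _ w(3)])
      fix n show "((\<lambda>i. v i /\<^sub>R norm (v i)) \<circ> r) n \<in> V"
        using assms(5) v(1)[of "r n"] unfolding is_cone_def by auto
    qed
    have wU: "w \<in> U"
    proof (rule closed_sequentially[OF assms(2)])
      fix n show "((\<lambda>i. u i /\<^sub>R norm (v i)) \<circ> r) n \<in> U"
        using assms(3) u(1)[of "r n"] unfolding is_cone_def by auto
      have "(\<lambda>i. u i /\<^sub>R norm (v i) - v i /\<^sub>R norm (v i)) \<longlonglongrightarrow> 0"
      proof (rule Lim_null_comparison)
        show "\<forall>\<^sub>F i in sequentially. norm (u i /\<^sub>R norm (v i) - v i /\<^sub>R norm (v i)) \<le> norm (v i - u i) / norm (v i)"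
        proof (rule always_eventually, rule allI)
          fix i
          have "u i /\<^sub>R norm (v i) - v i /\<^sub>R norm (v i) = (u i - v i) /\<^sub>R norm (v i)"
            by (simp add: algebra_simps)
          thus "norm (u i /\<^sub>R norm (v i) - v i /\<^sub>R norm (v i)) \<le> norm (v i - u i) / norm (v i)"
            by (simp add: norm_minus_commute divide_inverse_commute)
        qed
      qed (fact uvrel)
      from tendsto_add[OF LIMSEQ_subseq_LIMSEQ[OF this w(2)] w(3)]
      show "((\<lambda>i. u i /\<^sub>R norm (v i)) \<circ> r) \<longlonglongrightarrow> w"
        by (simp add: o_def)
    qed
    define z where "z i = norm (v (r i)) *\<^sub>R w" for i
    have nw: "norm w = 1" using w(1) by simp
    have nz: "norm (z i) = norm (v (r i))" for i using nw by (simp add: z_def)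
    have zball: "z i \<in> ball 0 \<delta>" for i using nz v(1)[of "r i"] by simp
    have zUV: "z i \<in> U \<inter> V" for i
      using assms(3,5) wU wV unfolding is_cone_def z_def by auto
    have znz: "z i \<noteq> 0" for i using nz vnz by (metis norm_eq_zero)
    have hznz: "h (z i) \<noteq> 0" for i
      using inj_onD[OF bl(5) _ zball z0] znz bl(4) by metis
    have vlim: "v \<longlonglongrightarrow> 0"
    proof (rule Lim_null_comparison)
      show "\<forall>\<^sub>F i in sequentially. norm (v i) \<le> norm (y i) / K1"
        using yv bl by (simp add: field_simps)
      show "(\<lambda>i. norm (y i) / K1) \<longlonglongrightarrow> 0"
        using tendsto_divide[OF tendsto_norm_zero[OF y(2)] tendsto_const, of K1] bl by simp
    qed
    have hzlim: "(\<lambda>i. h (z i)) \<longlonglongrightarrow> 0"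
    proof (rule Lim_null_comparison)
      show "\<forall>\<^sub>F i in sequentially. norm (h (z i)) \<le> K2 * norm (v (r i))"
        using lip[OF zball z0] bl(4) nz by simp
      have "(\<lambda>i. norm (v (r i))) \<longlonglongrightarrow> 0"
        using tendsto_norm_zero[OF LIMSEQ_subseq_LIMSEQ[OF vlim w(2)]] by (simp add: o_def)
      from tendsto_mult[OF tendsto_const this, of K2]
      show "(\<lambda>i. K2 * norm (v (r i))) \<longlonglongrightarrow> 0" by simp
    qed
    have dirlim: "(\<lambda>i. h (z i) /\<^sub>R norm (h (z i))) \<longlonglongrightarrow> a"
    proof (rule dir_tendsto[where p = "\<lambda>i. y (r i)"])
      show "\<And>i. y (r i) \<noteq> 0" using ynz by simp
      show "(\<lambda>i. y (r i) /\<^sub>R norm (y (r i))) \<longlonglongrightarrow> a"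
        using LIMSEQ_subseq_LIMSEQ[OF y(3) w(2)] by (simp add: o_def)
      have wlim: "(\<lambda>i. norm (v (r i) /\<^sub>R norm (v (r i)) - w)) \<longlonglongrightarrow> 0"
        using tendsto_norm_zero[OF LIM_zero[OF w(3)]] by (simp add: o_def)
      show "(\<lambda>i. norm (y (r i) - h (z i)) / norm (y (r i))) \<longlonglongrightarrow> 0"
      proof (rule Lim_null_comparison)
        show "\<forall>\<^sub>F i in sequentially. norm (norm (y (r i) - h (z i)) / norm (y (r i)))
               \<le> (K2 / K1) * norm (v (r i) /\<^sub>R norm (v (r i)) - w)"
        proof (rule always_eventually, rule allI)
          fix i
          let ?v = "v (r i)"
          have vp: "norm ?v > 0" using vpos by simp
          have e: "?v - z i = norm ?v *\<^sub>R (?v /\<^sub>R norm ?v - w)"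
            using vp by (simp add: z_def algebra_simps)
          have d: "norm (y (r i) - h (z i)) \<le> K2 * (norm ?v * norm (?v /\<^sub>R norm ?v - w))"
          proof -
            have "norm (y (r i) - h (z i)) \<le> K2 * norm (?v - z i)"
              using lip[OF v(1)[of "r i", THEN IntD2] zball[of i]] v(2)[of "r i"] by simp
            also have "norm (?v - z i) = norm ?v * norm (?v /\<^sub>R norm ?v - w)"
              unfolding e by simp
            finally show ?thesis .
          qed
          have yl: "K1 * norm ?v \<le> norm (y (r i))" using yv by simp
          have "norm (y (r i) - h (z i)) / norm (y (r i))
                \<le> (K2 * (norm ?v * norm (?v /\<^sub>R norm ?v - w))) / (K1 * norm ?v)"
            using d yl vp bl by (intro frac_le) auto
          also have "\<dots> = (K2 / K1) * norm (?v /\<^sub>R norm ?v - w)"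
            using vp bl by (simp add: field_simps)
          finally show "norm (norm (y (r i) - h (z i)) / norm (y (r i)))
               \<le> (K2 / K1) * norm (v (r i) /\<^sub>R norm (v (r i)) - w)" by simp
        qed
        show "(\<lambda>i. K2 / K1 * norm (v (r i) /\<^sub>R norm (v (r i)) - w)) \<longlonglongrightarrow> 0"
          using tendsto_mult[OF tendsto_const wlim, of "K2/K1"] by simp
      qed
    qed
    show "a \<in> tangent_dirs (h ` (U \<inter> V \<inter> ball 0 \<delta>))"
      unfolding tangent_dirs_def
      using na hzlim dirlim zUV zball hznz
      by (intro CollectI conjI exI[where x = "\<lambda>i. h (z i)"]) auto
  qed
qed

end
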